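(* Let $G=A\rtimes H$ be a semi-direct product of a finite abelian group $A$ and a finite group $H$ such that the action homomorphism $H\to\mathrm{Aut}(A)$ is injective. Let $(\pi,V)$ be a faithful representation of $G$ over $\mathbb{C}$. Then, via its permutation action on the one-dimensional $A$-irreducible constituents of $V$, $H$ admits an injective homomorphism $H\to S_{p}$ with $p=\dim_{\mathbb{C}}V$. Consequently $\mathrm{mdim}_{\mathbb{C}}(G)\ge\mu(H)$.
   Context: For a finite group $G$ and a field $F$, $\mathrm{mdim}_F(G)$ denotes the smallest dimension of a faithful representation of $G$ over $F$. For a finite group $H$, the minimal permutation degree $\mu(H)$ is the smallest $n$ such that $H$ embeds as a subgroup of the symmetric group $S_n$. *)

theory Defs
  imports "HOL-Algebra.Sym_Groups" "Jordan_Normal_Form.Matrix"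
begin

definition GL_C :: "nat \<Rightarrow> complex mat monoid" where
  "GL_C n = \<lparr> carrier = {M. M \<in> carrier_mat n n \<and> invertible_mat M},
             mult = (\<lambda>M N. M * N), one = 1\<^sub>m n \<rparr>"

definition faithful_rep :: "('g, 'b) monoid_scheme \<Rightarrow> nat \<Rightarrow> ('g \<Rightarrow> complex mat) \<Rightarrow> bool" where
  "faithful_rep G n \<pi> \<longleftrightarrow> \<pi> \<in> hom G (GL_C n) \<and> inj_on \<pi> (carrier G)"

definition mdim_C :: "('g, 'b) monoid_scheme \<Rightarrow> nat" where
  "mdim_C G = (LEAST n. \<exists>\<pi>. faithful_rep G n \<pi>)"

definition embeds_in_sym :: "('h, 'b) monoid_scheme \<Rightarrow> nat \<Rightarrow> bool" where
  "embeds_in_sym H n \<longleftrightarrow> (\<exists>f. f \<in> hom H (sym_group n) \<and> inj_on f (carrier H))"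

definition min_perm_degree :: "('h, 'b) monoid_scheme \<Rightarrow> nat" where
  "min_perm_degree H = (LEAST n. embeds_in_sym H n)"

definition internal_semidirect :: "('g, 'b) monoid_scheme \<Rightarrow> 'g set \<Rightarrow> 'g set \<Rightarrow> bool" where
  "internal_semidirect G A H \<longleftrightarrow> A \<lhd> G \<and> subgroup H G \<and> A \<inter> H = {\<one>\<^bsub>G\<^esub>}
     \<and> A <#>\<^bsub>G\<^esub> H = carrier G"

definition conj_action :: "('g, 'b) monoid_scheme \<Rightarrow> 'g set \<Rightarrow> 'g \<Rightarrow> ('g \<Rightarrow> 'g)" where
  "conj_action G A h = (\<lambda>a\<in>A. h \<otimes>\<^bsub>G\<^esub> a \<otimes>\<^bsub>G\<^esub> inv\<^bsub>G\<^esub> h)"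

end

theory Submission
  imports Defs "Jordan_Normal_Form.Determinant" "HOL-Algebra.Multiplicative_Group" "HOL-Library.Real_Mod"
begin

definition lc :: "nat \<Rightarrow> ('i \<Rightarrow> complex) \<Rightarrow> ('i \<Rightarrow> complex mat) \<Rightarrow> 'i set \<Rightarrow> complex mat" where
  "lc n c F I = mat n n (\<lambda>(r,s). \<Sum>i\<in>I. c i * F i $$ (r,s))"

lemma lc_carrier[simp]: "lc n c F I \<in> carrier_mat n n"
  unfolding lc_def by simp

lemma lc_dims[simp]: "dim_row (lc n c F I) = n" "dim_col (lc n c F I) = n"
  unfolding lc_def by simp_all

lemma lc_index[simp]: "r < n \<Longrightarrow> s < n \<Longrightarrow> lc n c F I $$ (r,s) = (\<Sum>i\<in>I. c i * F i $$ (r,s))"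
  unfolding lc_def by simp

lemma mult_entry:
  assumes "A \<in> carrier_mat n n" "B \<in> carrier_mat n n" "r < n" "s < n"
  shows "(A * B) $$ (r,s) = (\<Sum>l<n. A $$ (r,l) * B $$ (l,s))"
  using assms by (simp add: scalar_prod_def lessThan_atLeast0)

lemma mat_vec_zero[simp]: "A \<in> carrier_mat n m \<Longrightarrow> A *\<^sub>v 0\<^sub>v m = 0\<^sub>v n"
  by (rule eq_vecI) auto

lemma mult_lc:
  assumes X: "X \<in> carrier_mat n n" and F: "\<And>i. i \<in> I \<Longrightarrow> F i \<in> carrier_mat n n"
  shows "X * lc n c F I = lc n c (\<lambda>i. X * F i) I"
proof (rule eq_matI)
  fix r s assume r: "r < dim_row (lc n c (\<lambda>i. X * F i) I)" and s: "s < dim_col (lc n c (\<lambda>i. X * F i) I)"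
  hence r: "r < n" and s: "s < n" by auto
  have "(X * lc n c F I) $$ (r,s) = (\<Sum>l<n. X $$ (r,l) * (\<Sum>i\<in>I. c i * F i $$ (l,s)))"
    using X r s by (simp add: scalar_prod_def lessThan_atLeast0)
  also have "\<dots> = (\<Sum>i\<in>I. c i * (\<Sum>l<n. X $$ (r,l) * F i $$ (l,s)))"
    by (simp add: sum_distrib_left sum_distrib_right sum.swap[of _ I] algebra_simps)
  also have "\<dots> = lc n c (\<lambda>i. X * F i) I $$ (r,s)"
    using X F r s by (auto intro!: sum.cong simp: mult_entry)
  finally show "(X * lc n c F I) $$ (r,s) = lc n c (\<lambda>i. X * F i) I $$ (r,s)" .
qed (use X in auto)

lemma lc_mult:
  assumes X: "X \<in> carrier_mat n n" and F: "\<And>i. i \<in> I \<Longrightarrow> F i \<in> carrier_mat n n"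
  shows "lc n c F I * X = lc n c (\<lambda>i. F i * X) I"
proof (rule eq_matI)
  fix r s assume r: "r < dim_row (lc n c (\<lambda>i. F i * X) I)" and s: "s < dim_col (lc n c (\<lambda>i. F i * X) I)"
  hence r: "r < n" and s: "s < n" by auto
  have "(lc n c F I * X) $$ (r,s) = (\<Sum>l<n. (\<Sum>i\<in>I. c i * F i $$ (r,l)) * X $$ (l,s))"
    using X r s by (simp add: scalar_prod_def lessThan_atLeast0)
  also have "\<dots> = (\<Sum>i\<in>I. c i * (\<Sum>l<n. F i $$ (r,l) * X $$ (l,s)))"
    by (simp add: sum_distrib_left sum_distrib_right sum.swap[of _ I] algebra_simps)
  also have "\<dots> = lc n c (\<lambda>i. F i * X) I $$ (r,s)"
    using X F r s by (subst lc_index[OF r s], intro sum.cong refl, subst mult_entry[OF F X r s], auto)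
  finally show "(lc n c F I * X) $$ (r,s) = lc n c (\<lambda>i. F i * X) I $$ (r,s)" .
qed (use X in auto)

lemma lc_smult:
  assumes Y: "Y \<in> carrier_mat n n" and F: "\<And>i. i \<in> I \<Longrightarrow> F i = d i \<cdot>\<^sub>m Y"
  shows "lc n c F I = (\<Sum>i\<in>I. c i * d i) \<cdot>\<^sub>m Y"
  by (rule eq_matI) (use Y F in \<open>auto simp: sum_distrib_right mult.assoc\<close>)




locale frep =
  fixes G :: "('g,'b) monoid_scheme" (structure) and p :: nat and \<pi> :: "'g \<Rightarrow> complex mat"
  assumes grp: "group G" and fin: "finite (carrier G)"
    and hom: "\<pi> \<in> hom G (GL_C p)" and inj: "inj_on \<pi> (carrier G)"
begin

lemma pi_carrier[simp]: "x \<in> carrier G \<Longrightarrow> \<pi> x \<in> carrier_mat p p"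
  using hom unfolding hom_def GL_C_def by auto

lemma pi_invertible: "x \<in> carrier G \<Longrightarrow> invertible_mat (\<pi> x)"
  using hom unfolding hom_def GL_C_def by auto

lemma pi_mult: "x \<in> carrier G \<Longrightarrow> y \<in> carrier G \<Longrightarrow> \<pi> (x \<otimes>\<^bsub>G\<^esub> y) = \<pi> x * \<pi> y"
  using hom unfolding hom_def GL_C_def by auto

lemma pi_one[simp]: "\<pi> \<one>\<^bsub>G\<^esub> = 1\<^sub>m p"
proof -
  interpret group G by (rule grp)
  have c: "\<pi> \<one> \<in> carrier_mat p p" by simp
  obtain B where B: "inverts_mat B (\<pi> \<one>)" "B \<in> carrier_mat p p"
    using pi_invertible[of \<one>] c unfolding invertible_mat_def inverts_mat_def square_mat.simps
    by (metis carrier_matD carrier_matI index_mult_mat(2,3) index_one_mat(2,3) one_closed)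
  have "\<pi> \<one> = \<pi> \<one> * \<pi> \<one>" using pi_mult[of \<one> \<one>] by simp
  hence "B * \<pi> \<one> = B * (\<pi> \<one> * \<pi> \<one>)" by simp
  also have "\<dots> = (B * \<pi> \<one>) * \<pi> \<one>" using assoc_mult_mat[OF B(2) c c] by simp
  finally show ?thesis using B c unfolding inverts_mat_def by simp
qed

lemma pi_inv_l: "x \<in> carrier G \<Longrightarrow> \<pi> (inv\<^bsub>G\<^esub> x) * \<pi> x = 1\<^sub>m p"
  using grp by (metis group.inv_closed group.l_inv pi_mult pi_one)

lemma pi_inv_r: "x \<in> carrier G \<Longrightarrow> \<pi> x * \<pi> (inv\<^bsub>G\<^esub> x) = 1\<^sub>m p"
  using grp by (metis group.inv_closed group.r_inv pi_mult pi_one)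

lemma pi_vec_nonzero:
  assumes x: "x \<in> carrier G" and w: "w \<in> carrier_vec p" "w \<noteq> 0\<^sub>v p"
  shows "\<pi> x *\<^sub>v w \<noteq> 0\<^sub>v p"
proof
  assume h: "\<pi> x *\<^sub>v w = 0\<^sub>v p"
  have ic: "inv\<^bsub>G\<^esub> x \<in> carrier G" using grp x by simp
  have "w = (\<pi> (inv\<^bsub>G\<^esub> x) * \<pi> x) *\<^sub>v w" using pi_inv_l[OF x] w by simp
  also have "\<dots> = \<pi> (inv\<^bsub>G\<^esub> x) *\<^sub>v (\<pi> x *\<^sub>v w)"
    using assoc_mult_mat_vec[OF pi_carrier[OF ic] pi_carrier[OF x] w(1)] .
  also have "\<dots> = 0\<^sub>v p" unfolding h using pi_carrier[OF ic] by simp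
  finally show False using w by simp
qed

lemma pi_pow: "x \<in> carrier G \<Longrightarrow> \<pi> (x [^]\<^bsub>G\<^esub> Suc m) = \<pi> x * \<pi> (x [^]\<^bsub>G\<^esub> m)"
  using grp monoid.nat_pow_Suc2[OF group.is_monoid[OF grp]]
  by (simp add: group.is_monoid monoid.nat_pow_closed pi_mult)

end

lemma sum_shift_period: "f k = f 0 \<Longrightarrow> (\<Sum>m<k. f (Suc m)) = (\<Sum>m<k. (f m :: complex))"
  using sum.lessThan_Suc_shift[of f k] sum.lessThan_Suc[of f k] by simp

definition zeta :: "nat \<Rightarrow> complex" where "zeta k = cis (2 * pi / real k)"

lemma zeta_pow: "k > 0 \<Longrightarrow> zeta k ^ k = 1"
  unfolding zeta_def DeMoivre by simp

lemma zeta_nz: "zeta k \<noteq> 0" unfolding zeta_def by simp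

lemma zeta_pow_eq1: assumes "k > 0" "d < k" "zeta k ^ d = 1" shows "d = 0"
proof (rule ccontr)
  assume "d \<noteq> 0"
  from assms(3) obtain n :: int where n: "real d * (2 * pi / real k) = of_int n * (2 * pi)"
    unfolding zeta_def DeMoivre cis_eq_1_iff by blast
  hence "real d = of_int n * real k" using assms(1) by (simp add: field_simps)
  hence "int d = n * int k" by (metis of_int_eq_iff of_int_mult of_int_of_nat_eq)
  moreover have "n > 0" using \<open>d \<noteq> 0\<close> \<open>int d = n * int k\<close> assms(1)
    by (metis of_nat_0_less_iff of_nat_0_eq_iff zero_less_mult_pos2 bot_nat_0.not_eq_extremum mult_eq_0_iff less_int_code(1) linorder_neqE_linordered_idom)
  ultimately have "int d \<ge> int k" by (metis mult_le_cancel_right1 of_nat_less_0_iff linorder_not_less zless_imp_add1_zle add_0 ) 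
  thus False using assms(2) by simp
qed

lemma zeta_inj: assumes "k > 0" "i < k" "j < k" "zeta k ^ i = zeta k ^ j" shows "i = j"
proof (rule ccontr)
  assume ne: "i \<noteq> j"
  { fix a b assume ab: "a < b" "b < k" "zeta k ^ a = zeta k ^ b"
    have "zeta k ^ b = zeta k ^ a * zeta k ^ (b - a)" using ab(1) by (metis le_add_diff_inverse less_imp_le power_add)
    hence "zeta k ^ (b - a) = 1" using ab zeta_nz[of k] by simp
    hence "b - a = 0" using zeta_pow_eq1[OF assms(1), of "b - a"] ab by linarith
    hence False using ab by simp }
  thus False using ne assms by (metis linorder_neqE_nat)
qed

lemma geom_root: fixes w :: complex assumes "w ^ k = 1" "k > 0"
  shows "(\<Sum>m<k. w ^ m) = (if w = 1 then of_nat k else 0)"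
  using assms by (simp add: sum_gp_strict)

locale frepA = frep +
  fixes A :: "'g set"
  assumes A_sub: "subgroup A G"
    and A_comm: "\<And>x y. x \<in> A \<Longrightarrow> y \<in> A \<Longrightarrow> x \<otimes> y = y \<otimes> x"
begin

abbreviation kk :: nat where "kk \<equiv> Coset.order G"
abbreviation zz :: complex where "zz \<equiv> zeta (Coset.order G)"

lemma k_pos: "kk > 0" using fin monoid.order_gt_0_iff_finite[OF group.is_monoid[OF grp]] by simp

lemma A_carr: "a \<in> A \<Longrightarrow> a \<in> carrier G" using A_sub subgroup.subset by blast

lemma A_pow: "a \<in> A \<Longrightarrow> a [^] (m::nat) \<in> A"
  by (induction m) (auto simp: subgroup.one_closed[OF A_sub] subgroup.m_closed[OF A_sub])

lemma pow_k: "a \<in> carrier G \<Longrightarrow> a [^] kk = \<one>"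
  using grp by (simp add: group.pow_order_eq_1)

definition E :: "'g \<Rightarrow> nat \<Rightarrow> complex mat" where
  "E a j = lc p (\<lambda>m. zz ^ (j * m) / of_nat kk) (\<lambda>m. \<pi> (a [^] m)) {..<kk}"

lemma one_smult_mat: "(1::complex) \<cdot>\<^sub>m M = M" by (intro eq_matI) auto

lemma pow_swap: "((x::complex) ^ i) ^ j = (x ^ j) ^ i" by (metis power_mult mult.commute)

lemma E_carrier[simp]: "E a j \<in> carrier_mat p p" unfolding E_def by simp
lemma E_dims[simp]: "dim_row (E a j) = p" "dim_col (E a j) = p" unfolding E_def by simp_all

lemma pow_carr: "a \<in> A \<Longrightarrow> a [^] (m::nat) \<in> carrier G" using A_pow A_carr by blast

lemma E_eig: assumes a: "a \<in> A" shows "\<pi> a * E a j = inverse (zz ^ j) \<cdot>\<^sub>m E a j"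
proof -
  have "\<pi> a * E a j = lc p (\<lambda>m. zz ^ (j * m) / of_nat kk) (\<lambda>m. \<pi> a * \<pi> (a [^] m)) {..<kk}"
    unfolding E_def using a by (intro mult_lc) (auto simp: A_carr pow_carr)
  also have "\<dots> = lc p (\<lambda>m. zz ^ (j * m) / of_nat kk) (\<lambda>m. \<pi> (a [^] Suc m)) {..<kk}"
    by (simp only: pi_pow[OF A_carr[OF a]])
  also have "\<dots> = inverse (zz ^ j) \<cdot>\<^sub>m E a j"
  proof (rule eq_matI)
    fix r s assume rs: "r < dim_row (inverse (zz ^ j) \<cdot>\<^sub>m E a j)" "s < dim_col (inverse (zz ^ j) \<cdot>\<^sub>m E a j)"
    hence r: "r < p" and s: "s < p" by auto
    define f where "f m = zz ^ (j * m) / of_nat kk * \<pi> (a [^] m) $$ (r,s)" for m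
    have fk: "f kk = f 0" unfolding f_def using a zeta_pow[OF k_pos]
      by (simp add: pow_k A_carr power_mult[symmetric] mult.commute[of j] power_mult)
    have "(\<Sum>m<kk. zz ^ (j * m) / of_nat kk * \<pi> (a [^] Suc m) $$ (r,s))
       = inverse (zz ^ j) * (\<Sum>m<kk. f (Suc m))"
      unfolding f_def sum_distrib_left using zeta_nz
      by (intro sum.cong refl) (simp add: field_simps power_add)
    also have "\<dots> = inverse (zz ^ j) * (\<Sum>m<kk. f m)" using sum_shift_period[OF fk] by simp
    finally show "lc p (\<lambda>m. zz ^ (j * m) / of_nat kk) (\<lambda>m. \<pi> (a [^] Suc m)) {..<kk} $$ (r, s) =
         (inverse (zz ^ j) \<cdot>\<^sub>m E a j) $$ (r, s)"
      using r s unfolding E_def f_def by simp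
  qed auto
  finally show ?thesis .
qed

lemma E_eig_pow: assumes a: "a \<in> A" shows "\<pi> (a [^] m) * E a j = (inverse (zz ^ j)) ^ m \<cdot>\<^sub>m E a j"
proof (induction m)
  case 0
  have "\<pi> (a [^] (0::nat)) = 1\<^sub>m p" by simp
  then show ?case using left_mult_one_mat[OF E_carrier[of a j]] by (simp add: one_smult_mat)
next
  case (Suc m)
  have "\<pi> (a [^] Suc m) * E a j = \<pi> a * \<pi> (a [^] m) * E a j"
    by (simp only: pi_pow[OF A_carr[OF a]])
  also have "\<dots> = \<pi> a * (\<pi> (a [^] m) * E a j)"
    using assoc_mult_mat[OF pi_carrier[OF A_carr[OF a]] pi_carrier[OF pow_carr[OF a]] E_carrier] .
  also have "\<dots> = (inverse (zz ^ j)) ^ m \<cdot>\<^sub>m (\<pi> a * E a j)"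
    unfolding Suc using a by (simp add: mult_smult_distrib[of _ p p _ p] A_carr)
  also have "\<dots> = (inverse (zz ^ j)) ^ Suc m \<cdot>\<^sub>m E a j"
    unfolding E_eig[OF a] by (intro eq_matI) auto
  finally show ?case .
qed

lemma E_orth: assumes a: "a \<in> A" and ij: "i < kk" "j < kk"
  shows "E a i * E a j = (if i = j then E a j else 0\<^sub>m p p)"
proof -
  have "E a i * E a j = lc p (\<lambda>m. zz ^ (i * m) / of_nat kk) (\<lambda>m. \<pi> (a [^] m) * E a j) {..<kk}"
    unfolding E_def[of a i] using a by (intro lc_mult) (auto simp: pow_carr)
  also have "\<dots> = (\<Sum>m<kk. zz ^ (i * m) / of_nat kk * (inverse (zz ^ j)) ^ m) \<cdot>\<^sub>m E a j"
    by (rule lc_smult) (simp_all add: E_eig_pow a)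
  also have "(\<Sum>m<kk. zz ^ (i * m) / of_nat kk * (inverse (zz ^ j)) ^ m)
      = (\<Sum>m<kk. (zz ^ i * inverse (zz ^ j)) ^ m) / of_nat kk"
    by (simp add: sum_divide_distrib power_mult power_mult_distrib)
  also have "\<dots> = (if i = j then 1 else 0)"
  proof -
    have w: "(zz ^ i * inverse (zz ^ j)) ^ kk = 1"
      using zeta_pow[OF k_pos] by (simp add: power_mult_distrib pow_swap[of zz i kk] pow_swap[of zz j kk] power_inverse)
    have "(zz ^ i * inverse (zz ^ j) = 1) \<longleftrightarrow> i = j"
      using zeta_inj[OF k_pos ij] zeta_nz by (auto simp: field_simps)
    thus ?thesis using geom_root[OF w k_pos] k_pos by simp
  qed
  finally show ?thesis by (auto intro!: eq_matI)
qed

lemma E_sum: assumes a: "a \<in> A" shows "lc p (\<lambda>_. 1) (E a) {..<kk} = 1\<^sub>m p"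
proof (rule eq_matI)
  fix r s assume "r < dim_row (1\<^sub>m p)" "s < dim_col (1\<^sub>m p)"
  hence r: "r < p" and s: "s < p" by auto
  have "lc p (\<lambda>_. 1) (E a) {..<kk} $$ (r,s)
     = (\<Sum>j<kk. \<Sum>m<kk. zz ^ (j * m) / of_nat kk * \<pi> (a [^] m) $$ (r,s))"
    using r s by (simp add: E_def)
  also have "\<dots> = (\<Sum>m<kk. \<pi> (a [^] m) $$ (r,s) / of_nat kk * (\<Sum>j<kk. (zz ^ m) ^ j))"
  proof -
    have pm: "\<And>j m. zz ^ (j * m) = (zz ^ m) ^ j" by (simp add: power_mult[symmetric] mult.commute)
    show ?thesis
      by (subst sum.swap, intro sum.cong refl)
         (simp add: sum_distrib_left sum_divide_distrib power_mult[symmetric] algebra_simps)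
  qed
  also have "\<dots> = (\<Sum>m<kk. if m = 0 then \<pi> (a [^] m) $$ (r,s) else 0)"
  proof (intro sum.cong refl)
    fix m assume m: "m \<in> {..<kk}"
    have w: "(zz ^ m) ^ kk = 1" using zeta_pow[OF k_pos]
      by (metis power_mult mult.commute power_one)
    have "(zz ^ m = 1) \<longleftrightarrow> m = 0" using zeta_pow_eq1[OF k_pos] m by auto
    thus "\<pi> (a [^] m) $$ (r,s) / of_nat kk * (\<Sum>j<kk. (zz ^ m) ^ j) = (if m = 0 then \<pi> (a [^] m) $$ (r,s) else 0)"
      using geom_root[OF w k_pos] k_pos by simp
  qed
  also have "\<dots> = 1\<^sub>m p $$ (r,s)" using k_pos r s by (simp add: sum.delta)
  finally show "lc p (\<lambda>_. 1) (E a) {..<kk} $$ (r,s) = 1\<^sub>m p $$ (r,s)" .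
qed auto

lemma E_comm: assumes a: "a \<in> A" and X: "X \<in> carrier_mat p p"
  and c: "\<And>b. b \<in> A \<Longrightarrow> \<pi> b * X = X * \<pi> b"
  shows "E a j * X = X * E a j"
proof -
  have "E a j * X = lc p (\<lambda>m. zz ^ (j * m) / of_nat kk) (\<lambda>m. \<pi> (a [^] m) * X) {..<kk}"
    unfolding E_def using X a by (intro lc_mult) (auto simp: pow_carr)
  also have "\<dots> = lc p (\<lambda>m. zz ^ (j * m) / of_nat kk) (\<lambda>m. X * \<pi> (a [^] m)) {..<kk}"
    using c a A_pow by simp
  also have "\<dots> = X * E a j"
    unfolding E_def using X a by (intro mult_lc[symmetric]) (auto simp: pow_carr)
  finally show ?thesis .
qed

lemma pi_comm: "a \<in> A \<Longrightarrow> b \<in> A \<Longrightarrow> \<pi> a * \<pi> b = \<pi> b * \<pi> a"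
  using A_comm by (metis A_carr pi_mult)

end

lemma assoc4a: assumes "A \<in> carrier_mat n n" "B \<in> carrier_mat n n" "C \<in> carrier_mat n n" "D \<in> carrier_mat n n"
  shows "A * B * (C * D) = A * (B * C) * D"
proof -
  have "A * B * (C * D) = A * (B * (C * D))" using assms by (intro assoc_mult_mat) auto
  also have "B * (C * D) = B * C * D" using assms by (intro assoc_mult_mat[symmetric]) auto
  also have "A * (B * C * D) = A * (B * C) * D" using assms by (intro assoc_mult_mat[symmetric]) auto
  finally show ?thesis .
qed

lemma assoc4b: assumes "A \<in> carrier_mat n n" "B \<in> carrier_mat n n" "C \<in> carrier_mat n n" "D \<in> carrier_mat n n"
  shows "A * (B * C) * D = (A * B) * (C * D)"
proof -
  have "A * (B * C) * D = A * (B * C * D)" using assms by (intro assoc_mult_mat) auto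
  also have "B * C * D = B * (C * D)" using assms by (intro assoc_mult_mat) auto
  also have "A * (B * (C * D)) = A * B * (C * D)" using assms by (intro assoc_mult_mat[symmetric]) auto
  finally show ?thesis .
qed

context frepA
begin

definition fam_ok :: "'g list \<Rightarrow> nat list set \<Rightarrow> (nat list \<Rightarrow> complex mat) \<Rightarrow> bool" where
  "fam_ok as T Q \<longleftrightarrow> finite T \<and> (\<forall>t\<in>T. Q t \<in> carrier_mat p p) \<and> lc p (\<lambda>_. 1) Q T = 1\<^sub>m p
    \<and> (\<forall>s\<in>T. \<forall>t\<in>T. Q s * Q t = (if s = t then Q t else 0\<^sub>m p p))
    \<and> (\<forall>b\<in>set as. \<forall>t\<in>T. \<exists>c. \<pi> b * Q t = c \<cdot>\<^sub>m Q t)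
    \<and> (\<forall>b\<in>A. \<forall>t\<in>T. \<pi> b * Q t = Q t * \<pi> b)"

lemma fam_base: "fam_ok [] {[]} (\<lambda>_. 1\<^sub>m p)"
proof -
  have c: "\<forall>b\<in>A. \<forall>t\<in>{[]}. \<pi> b * 1\<^sub>m p = 1\<^sub>m p * \<pi> b"
    using A_carr by (metis left_mult_one_mat right_mult_one_mat pi_carrier)
  have l: "lc p (\<lambda>_. 1) (\<lambda>_. 1\<^sub>m p) {[]} = 1\<^sub>m p" by (auto intro!: eq_matI)
  show ?thesis unfolding fam_ok_def using c l by auto
qed

lemma fam_step:
  assumes ok: "fam_ok as T Q" and a: "a \<in> A" and asA: "set as \<subseteq> A"
  shows "fam_ok (a # as) ((\<lambda>(j,t). j # t) ` ({..<kk} \<times> T)) (\<lambda>u. E a (hd u) * Q (tl u))"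
proof -
  define T2 where "T2 = (\<lambda>(j,t). j # t) ` ({..<kk} \<times> T)"
  define Q2 where "Q2 = (\<lambda>u. E a (hd u) * Q (tl u))"
  have fT: "finite T" and QC: "\<And>t. t \<in> T \<Longrightarrow> Q t \<in> carrier_mat p p"
    and Qsum: "lc p (\<lambda>_. 1) Q T = 1\<^sub>m p"
    and Qorth: "\<And>s t. s \<in> T \<Longrightarrow> t \<in> T \<Longrightarrow> Q s * Q t = (if s = t then Q t else 0\<^sub>m p p)"
    and Qeig: "\<And>b t. b \<in> set as \<Longrightarrow> t \<in> T \<Longrightarrow> \<exists>c. \<pi> b * Q t = c \<cdot>\<^sub>m Q t"
    and Qcomm: "\<And>b t. b \<in> A \<Longrightarrow> t \<in> T \<Longrightarrow> \<pi> b * Q t = Q t * \<pi> b"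
    using ok unfolding fam_ok_def by auto
  have injT: "inj_on (\<lambda>(j,t). j # t) ({..<kk} \<times> T)" by (auto simp: inj_on_def)
  have Q2C: "\<And>u. u \<in> T2 \<Longrightarrow> Q2 u \<in> carrier_mat p p"
    unfolding T2_def Q2_def using QC by (auto intro!: mult_carrier_mat[OF E_carrier])
  have EQ: "E a j * Q t = Q t * E a j" if t: "t \<in> T" for j t
    by (rule E_comm[OF a QC[OF t]]) (rule Qcomm[OF _ t])
  have "lc p (\<lambda>_. 1) Q2 T2 = 1\<^sub>m p"
  proof (rule eq_matI)
    fix r s assume "r < dim_row (1\<^sub>m p)" "s < dim_col (1\<^sub>m p)"
    hence r: "r < p" and s: "s < p" by auto
    have "lc p (\<lambda>_. 1) Q2 T2 $$ (r,s) = (\<Sum>u\<in>T2. Q2 u $$ (r,s))" using r s by simp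
    also have "\<dots> = (\<Sum>(j,t)\<in>{..<kk} \<times> T. (E a j * Q t) $$ (r,s))"
      unfolding T2_def by (subst sum.reindex[OF injT]) (simp add: Q2_def case_prod_beta)
    also have "\<dots> = (\<Sum>j<kk. \<Sum>t\<in>T. (E a j * Q t) $$ (r,s))"
      by (simp add: sum.cartesian_product)
    also have "\<dots> = (\<Sum>j<kk. (E a j * lc p (\<lambda>_. 1) Q T) $$ (r,s))"
    proof (intro sum.cong refl)
      fix j
      have "E a j * lc p (\<lambda>_. 1) Q T = lc p (\<lambda>_. 1) (\<lambda>t. E a j * Q t) T"
        by (rule mult_lc[OF E_carrier QC])
      thus "(\<Sum>t\<in>T. (E a j * Q t) $$ (r,s)) = (E a j * lc p (\<lambda>_. 1) Q T) $$ (r,s)"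
        using r s by simp
    qed
    also have "\<dots> = (\<Sum>j<kk. E a j $$ (r,s))" unfolding Qsum
      by (simp add: right_mult_one_mat[OF E_carrier])
    also have "\<dots> = 1\<^sub>m p $$ (r,s)" using E_sum[OF a] r s lc_index[OF r s, of "\<lambda>_. 1" "E a" "{..<kk}"]
      by simp
    finally show "lc p (\<lambda>_. 1) Q2 T2 $$ (r,s) = 1\<^sub>m p $$ (r,s)" .
  qed auto
  moreover have "\<forall>u\<in>T2. \<forall>v\<in>T2. Q2 u * Q2 v = (if u = v then Q2 v else 0\<^sub>m p p)"
  proof (intro ballI)
    fix u v assume u: "u \<in> T2" and v: "v \<in> T2"
    then obtain j s i t where js: "j < kk" "s \<in> T" "u = j # s" and it: "i < kk" "t \<in> T" "v = i # t"
      unfolding T2_def by auto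
    have Cs: "Q s \<in> carrier_mat p p" and Ct: "Q t \<in> carrier_mat p p" using QC js it by auto
    have "Q2 u * Q2 v = E a j * Q s * (E a i * Q t)" using js it by (simp add: Q2_def)
    also have "\<dots> = E a j * (Q s * E a i) * Q t"
      using Cs Ct by (intro assoc4a) auto
    also have "\<dots> = E a j * (E a i * Q s) * Q t" using EQ[OF js(2)] by simp
    also have "\<dots> = (E a j * E a i) * (Q s * Q t)"
      using Cs Ct by (intro assoc4b) auto
    also have "\<dots> = (if u = v then Q2 v else 0\<^sub>m p p)"
    proof (cases "u = v")
      case True
      hence "j = i" "s = t" using js it by auto
      thus ?thesis using True E_orth[OF a js(1) it(1)] Qorth[OF js(2) it(2)] it by (simp add: Q2_def)
    next
      case False
      hence "j \<noteq> i \<or> s \<noteq> t" using js it by auto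
      thus ?thesis
      proof
        assume "j \<noteq> i"
        hence "E a j * E a i = 0\<^sub>m p p" using E_orth[OF a js(1) it(1)] by simp
        thus ?thesis using False Cs Ct by simp
      next
        assume "s \<noteq> t"
        hence "Q s * Q t = 0\<^sub>m p p" using Qorth[OF js(2) it(2)] by simp
        thus ?thesis using False by simp
      qed
    qed
    finally show "Q2 u * Q2 v = (if u = v then Q2 v else 0\<^sub>m p p)" .
  qed
  moreover have "\<forall>b\<in>set (a # as). \<forall>u\<in>T2. \<exists>c. \<pi> b * Q2 u = c \<cdot>\<^sub>m Q2 u"
  proof (intro ballI)
    fix b u assume b: "b \<in> set (a # as)" and u: "u \<in> T2"
    then obtain j t where jt: "j < kk" "t \<in> T" "u = j # t" unfolding T2_def by auto
    have Ct: "Q t \<in> carrier_mat p p" using QC jt by auto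
    have bA: "b \<in> A" using b a asA by auto
    show "\<exists>c. \<pi> b * Q2 u = c \<cdot>\<^sub>m Q2 u"
    proof (cases "b = a")
      case True
      have "\<pi> b * Q2 u = (\<pi> a * E a j) * Q t" using jt True Ct a
        by (simp add: Q2_def assoc_mult_mat[OF pi_carrier[OF A_carr[OF a]] E_carrier Ct])
      also have "\<dots> = inverse (zz ^ j) \<cdot>\<^sub>m Q2 u" unfolding E_eig[OF a] using jt Ct
        by (simp add: Q2_def mult_smult_assoc_mat[OF E_carrier Ct])
      finally show ?thesis by blast
    next
      case False
      hence bs: "b \<in> set as" using b by simp
      obtain c where c: "\<pi> b * Q t = c \<cdot>\<^sub>m Q t" using Qeig[OF bs jt(2)] by blast
      have Cb: "\<pi> b \<in> carrier_mat p p" using bA A_carr by simp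
      have "\<pi> b * Q2 u = (\<pi> b * E a j) * Q t" using jt Ct bA
        by (simp add: Q2_def assoc_mult_mat[OF Cb E_carrier Ct])
      also have "\<dots> = E a j * \<pi> b * Q t"
        using E_comm[OF a Cb, of j] pi_comm[OF bA] by simp
      also have "\<dots> = E a j * (\<pi> b * Q t)"
        by (rule assoc_mult_mat[OF E_carrier Cb Ct])
      also have "\<dots> = c \<cdot>\<^sub>m Q2 u" unfolding c using jt Ct
        by (simp add: Q2_def mult_smult_distrib[OF E_carrier Ct])
      finally show ?thesis by blast
    qed
  qed
  moreover have "\<forall>b\<in>A. \<forall>u\<in>T2. \<pi> b * Q2 u = Q2 u * \<pi> b"
  proof (intro ballI)
    fix b u assume bA: "b \<in> A" and u: "u \<in> T2"
    then obtain j t where jt: "j < kk" "t \<in> T" "u = j # t" unfolding T2_def by auto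
    have Ct: "Q t \<in> carrier_mat p p" using QC jt by auto
    have Cb: "\<pi> b \<in> carrier_mat p p" using bA A_carr by simp
    have "\<pi> b * Q2 u = (\<pi> b * E a j) * Q t" using jt Ct Cb
      by (simp add: Q2_def assoc_mult_mat[OF Cb E_carrier Ct])
    also have "\<dots> = E a j * \<pi> b * Q t"
      using E_comm[OF a Cb, of j] pi_comm[OF bA] by simp
    also have "\<dots> = E a j * (\<pi> b * Q t)"
      by (rule assoc_mult_mat[OF E_carrier Cb Ct])
    also have "\<dots> = E a j * (Q t * \<pi> b)" using Qcomm[OF bA jt(2)] by simp
    also have "\<dots> = Q2 u * \<pi> b" using jt
      by (simp add: Q2_def assoc_mult_mat[OF E_carrier Ct Cb])
    finally show "\<pi> b * Q2 u = Q2 u * \<pi> b" .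
  qed
  moreover have "finite T2" unfolding T2_def using fT by simp
  ultimately show ?thesis unfolding fam_ok_def T2_def[symmetric] Q2_def[symmetric]
    using Q2C by blast
qed

lemma fam_exists: "set as \<subseteq> A \<Longrightarrow> \<exists>T Q. fam_ok as T Q"
proof (induction as)
  case Nil
  then show ?case using fam_base by blast
next
  case (Cons a as)
  hence "a \<in> A" "set as \<subseteq> A" by auto
  then obtain T Q where "fam_ok as T Q" using Cons.IH by blast
  thus ?case using fam_step \<open>a \<in> A\<close> \<open>set as \<subseteq> A\<close> by blast
qed

end

lemma nonzero_entry: assumes "M \<in> carrier_mat n n" "M \<noteq> 0\<^sub>m n n"
  shows "\<exists>r j. r < n \<and> j < n \<and> M $$ (r,j) \<noteq> 0"
  using assms by (metis carrier_matD(1,2) eq_matI index_zero_mat(1,2,3))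

lemma smult_vec_cancel: assumes "v \<in> carrier_vec n" "v \<noteq> 0\<^sub>v n" "c \<cdot>\<^sub>v v = d \<cdot>\<^sub>v v"
  shows "c = (d::complex)"
proof -
  obtain i where i: "i < n" "v $ i \<noteq> 0" using assms(1,2) by (metis eq_vecI carrier_vecD index_zero_vec)
  have "(c \<cdot>\<^sub>v v) $ i = (d \<cdot>\<^sub>v v) $ i" using assms(3) by simp
  thus ?thesis using i assms(1) by auto
qed

lemma smult_mat_vec: assumes "M \<in> carrier_mat n m" "w \<in> carrier_vec m"
  shows "(c \<cdot>\<^sub>m M) *\<^sub>v w = (c::complex) \<cdot>\<^sub>v (M *\<^sub>v w)"
  by (rule eq_vecI) (use assms in \<open>auto simp: scalar_prod_def sum_distrib_left mult.assoc\<close>)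

locale frepF = frepA +
  fixes T :: "nat list set" and Q :: "nat list \<Rightarrow> complex mat"
  assumes fT: "finite T" and QC: "t \<in> T \<Longrightarrow> Q t \<in> carrier_mat p p"
    and Qsum: "lc p (\<lambda>_. 1) Q T = 1\<^sub>m p"
    and Qorth: "s \<in> T \<Longrightarrow> t \<in> T \<Longrightarrow> Q s * Q t = (if s = t then Q t else 0\<^sub>m p p)"
    and Qeig: "b \<in> A \<Longrightarrow> t \<in> T \<Longrightarrow> \<exists>c. \<pi> b * Q t = c \<cdot>\<^sub>m Q t"
    and Qcomm: "b \<in> A \<Longrightarrow> t \<in> T \<Longrightarrow> \<pi> b * Q t = Q t * \<pi> b"
begin

definition chi where
  "chi t = (\<lambda>b\<in>A. SOME c. \<pi> b * Q t = c \<cdot>\<^sub>m Q t)"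

lemma chi_eq: assumes "b \<in> A" "t \<in> T" shows "\<pi> b * Q t = chi t b \<cdot>\<^sub>m Q t"
  using someI_ex[OF Qeig[OF assms]] assms(1) unfolding chi_def by simp

definition Tn where "Tn = {t\<in>T. Q t \<noteq> 0\<^sub>m p p}"

definition Xc where
  "Xc = {\<psi>. \<psi> \<in> extensional A \<and> (\<exists>w\<in>carrier_vec p. w \<noteq> 0\<^sub>v p \<and> (\<forall>a\<in>A. \<pi> a *\<^sub>v w = \<psi> a \<cdot>\<^sub>v w))}"

lemma chi_in_X: assumes t: "t \<in> Tn" shows "chi t \<in> Xc"
proof -
  have tT: "t \<in> T" and nz: "Q t \<noteq> 0\<^sub>m p p" using t unfolding Tn_def by auto
  obtain r j where rj: "r < p" "j < p" "Q t $$ (r,j) \<noteq> 0" using nonzero_entry[OF QC[OF tT] nz] by blast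
  define w where "w = col (Q t) j"
  have wc: "w \<in> carrier_vec p" unfolding w_def using QC[OF tT] rj by simp
  have wnz: "w \<noteq> 0\<^sub>v p"
  proof
    assume "w = 0\<^sub>v p"
    hence "w $ r = 0" using rj by simp
    thus False unfolding w_def using rj QC[OF tT] by simp
  qed
  have "\<forall>a\<in>A. \<pi> a *\<^sub>v w = chi t a \<cdot>\<^sub>v w"
  proof
    fix a assume a: "a \<in> A"
    have "\<pi> a *\<^sub>v w = col (\<pi> a * Q t) j" unfolding w_def
      using col_mult2[OF pi_carrier[OF A_carr[OF a]] QC[OF tT] rj(2)] by simp
    also have "\<dots> = chi t a \<cdot>\<^sub>v w" unfolding chi_eq[OF a tT] w_def using QC[OF tT] rj by simp
    finally show "\<pi> a *\<^sub>v w = chi t a \<cdot>\<^sub>v w" .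
  qed
  moreover have "chi t \<in> extensional A" unfolding chi_def by simp
  ultimately show ?thesis unfolding Xc_def using wc wnz by blast
qed

lemma lc_mult_vec: assumes w: "w \<in> carrier_vec p" and r: "r < p"
  shows "(lc p (\<lambda>_. 1) Q T *\<^sub>v w) $ r = (\<Sum>t\<in>T. (Q t *\<^sub>v w) $ r)"
proof -
  have "(lc p (\<lambda>_. 1) Q T *\<^sub>v w) $ r = (\<Sum>l<p. (\<Sum>t\<in>T. Q t $$ (r,l)) * w $ l)"
    using r w by (simp add: scalar_prod_def lessThan_atLeast0)
  also have "\<dots> = (\<Sum>t\<in>T. \<Sum>l<p. Q t $$ (r,l) * w $ l)"
    by (simp add: sum_distrib_right sum.swap[of _ T])
  also have "\<dots> = (\<Sum>t\<in>T. (Q t *\<^sub>v w) $ r)"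
  proof (intro sum.cong refl)
    fix t assume t: "t \<in> T"
    have "Q t \<in> carrier_mat p p" by (rule QC[OF t])
    thus "(\<Sum>l<p. Q t $$ (r,l) * w $ l) = (Q t *\<^sub>v w) $ r"
      using r w by (simp add: scalar_prod_def lessThan_atLeast0)
  qed
  finally show ?thesis .
qed

lemma X_sub: "Xc \<subseteq> chi ` Tn"
proof
  fix \<psi> assume psi: "\<psi> \<in> Xc"
  then obtain w where w: "w \<in> carrier_vec p" "w \<noteq> 0\<^sub>v p" "\<forall>a\<in>A. \<pi> a *\<^sub>v w = \<psi> a \<cdot>\<^sub>v w"
    and ext: "\<psi> \<in> extensional A" unfolding Xc_def by blast
  have "\<exists>t\<in>T. Q t *\<^sub>v w \<noteq> 0\<^sub>v p"
  proof (rule ccontr)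
    assume "\<not> ?thesis"
    hence z: "\<And>t. t \<in> T \<Longrightarrow> Q t *\<^sub>v w = 0\<^sub>v p" by blast
    have "w = lc p (\<lambda>_. 1) Q T *\<^sub>v w" unfolding Qsum using w by simp
    also have "\<dots> = 0\<^sub>v p"
    proof (rule eq_vecI)
      fix r assume "r < dim_vec (0\<^sub>v p)"
      hence r: "r < p" by simp
      show "(lc p (\<lambda>_. 1) Q T *\<^sub>v w) $ r = 0\<^sub>v p $ r"
        unfolding lc_mult_vec[OF w(1) r] using z r by simp
    qed simp
    finally show False using w by simp
  qed
  then obtain t where tT: "t \<in> T" and nz: "Q t *\<^sub>v w \<noteq> 0\<^sub>v p" by blast
  have tn: "t \<in> Tn" unfolding Tn_def using tT nz w(1) by auto
  have vc: "Q t *\<^sub>v w \<in> carrier_vec p" using QC[OF tT] w(1) by simp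
  have "\<psi> a = chi t a" if a: "a \<in> A" for a
  proof -
    have Ca: "\<pi> a \<in> carrier_mat p p" using a A_carr by simp
    have "\<pi> a *\<^sub>v (Q t *\<^sub>v w) = (\<pi> a * Q t) *\<^sub>v w" using assoc_mult_mat_vec[OF Ca QC[OF tT] w(1)] by simp
    also have "\<dots> = chi t a \<cdot>\<^sub>v (Q t *\<^sub>v w)" unfolding chi_eq[OF a tT]
      using smult_mat_vec[OF QC[OF tT] w(1)] .
    finally have 1: "\<pi> a *\<^sub>v (Q t *\<^sub>v w) = chi t a \<cdot>\<^sub>v (Q t *\<^sub>v w)" .
    have "\<pi> a *\<^sub>v (Q t *\<^sub>v w) = (Q t * \<pi> a) *\<^sub>v w" using assoc_mult_mat_vec[OF Ca QC[OF tT] w(1)] Qcomm[OF a tT] by simp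
    also have "\<dots> = Q t *\<^sub>v (\<psi> a \<cdot>\<^sub>v w)" using assoc_mult_mat_vec[OF QC[OF tT] Ca w(1)] w(3) a by simp
    also have "\<dots> = \<psi> a \<cdot>\<^sub>v (Q t *\<^sub>v w)" using mult_mat_vec[OF QC[OF tT] w(1)] by simp
    finally have 2: "\<pi> a *\<^sub>v (Q t *\<^sub>v w) = \<psi> a \<cdot>\<^sub>v (Q t *\<^sub>v w)" .
    show ?thesis using smult_vec_cancel[OF vc nz] 1 2 by simp
  qed
  hence "\<psi> = chi t" using ext unfolding chi_def by (auto simp: extensional_def fun_eq_iff)
  thus "\<psi> \<in> chi ` Tn" using tn by blast
qed

lemma separation: assumes b: "b \<in> A" and c: "c \<in> A" and eq: "\<And>\<psi>. \<psi> \<in> Xc \<Longrightarrow> \<psi> b = \<psi> c"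
  shows "b = c"
proof -
  have Cb: "\<pi> b \<in> carrier_mat p p" and Cc: "\<pi> c \<in> carrier_mat p p" using b c A_carr by auto
  have e: "\<pi> b * Q t = \<pi> c * Q t" if t: "t \<in> T" for t
  proof (cases "Q t = 0\<^sub>m p p")
    case True thus ?thesis using Cb Cc by simp
  next
    case False
    hence "t \<in> Tn" using t unfolding Tn_def by simp
    hence "chi t b = chi t c" using eq chi_in_X by blast
    thus ?thesis using chi_eq[OF b t] chi_eq[OF c t] by simp
  qed
  have "\<pi> b = \<pi> b * lc p (\<lambda>_. 1) Q T" unfolding Qsum using Cb by simp
  also have "\<dots> = lc p (\<lambda>_. 1) (\<lambda>t. \<pi> b * Q t) T" by (rule mult_lc[OF Cb QC])
  also have "\<dots> = lc p (\<lambda>_. 1) (\<lambda>t. \<pi> c * Q t) T" unfolding lc_def using e by simp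
  also have "\<dots> = \<pi> c * lc p (\<lambda>_. 1) Q T" by (rule mult_lc[OF Cc QC, symmetric])
  also have "\<dots> = \<pi> c" unfolding Qsum using Cc by simp
  finally show ?thesis using inj b c A_carr unfolding inj_on_def by blast
qed

end

context frepF
begin

lemma fTn: "finite Tn" unfolding Tn_def using fT by simp

lemma card_Tn: "card Tn \<le> p"
proof (rule ccontr)
  assume "\<not> ?thesis"
  hence pm: "p < card Tn" by simp
  define m where "m = card Tn"
  obtain g where g: "bij_betw g {0..<m} Tn" using ex_bij_betw_nat_finite[OF fTn] unfolding m_def by blast
  have gT: "g c \<in> T" "Q (g c) \<noteq> 0\<^sub>m p p" if "c < m" for c
    using g that unfolding bij_betw_def Tn_def by auto
  have gC: "Q (g c) \<in> carrier_mat p p" if "c < m" for c using QC gT that by blast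
  have ginj: "g s = g c \<longleftrightarrow> s = c" if "s < m" "c < m" for s c
    using g that unfolding bij_betw_def inj_on_def by auto
  define rr where "rr c = (SOME r. \<exists>j. r < p \<and> j < p \<and> Q (g c) $$ (r,j) \<noteq> 0)" for c
  define jj where "jj c = (SOME j. rr c < p \<and> j < p \<and> Q (g c) $$ (rr c,j) \<noteq> 0)" for c
  have rj: "rr c < p \<and> jj c < p \<and> Q (g c) $$ (rr c, jj c) \<noteq> 0" if c: "c < m" for c
  proof -
    have "\<exists>r j. r < p \<and> j < p \<and> Q (g c) $$ (r,j) \<noteq> 0"
      by (rule nonzero_entry[OF gC[OF c] gT(2)[OF c]])
    hence "\<exists>j. rr c < p \<and> j < p \<and> Q (g c) $$ (rr c,j) \<noteq> 0" unfolding rr_def by (rule someI_ex)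
    thus ?thesis unfolding jj_def by (rule someI_ex)
  qed
  define f where "f i = (if i = p then 0\<^sub>v m else vec m (\<lambda>c. if i < p then Q (g c) $$ (i, jj c) else 0))" for i
  define V where "V = mat\<^sub>r m m f"
  have "det V = 0" unfolding V_def f_def
    by (rule det_row_0) (use pm m_def in auto)
  moreover have VC: "V \<in> carrier_mat m m" unfolding V_def by simp
  ultimately obtain x where x: "x \<in> carrier_vec m" "x \<noteq> 0\<^sub>v m" "V *\<^sub>v x = 0\<^sub>v m"
    using det_0_iff_vec_prod_zero[OF VC] by blast
  have rows: "(\<Sum>c<m. Q (g c) $$ (r, jj c) * x $ c) = 0" if r: "r < p" for r
  proof -
    have rm: "r < m" using r pm m_def by simp
    have "(V *\<^sub>v x) $ r = 0" using x(3) rm by simp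
    thus ?thesis using r rm x(1) unfolding V_def f_def
      by (simp add: scalar_prod_def lessThan_atLeast0)
  qed
  have "x $ s = 0" if s: "s < m" for s
  proof -
    have "0 = (\<Sum>r<p. Q (g s) $$ (rr s, r) * (\<Sum>c<m. Q (g c) $$ (r, jj c) * x $ c))"
      using rows by simp
    also have "\<dots> = (\<Sum>c<m. x $ c * (\<Sum>r<p. Q (g s) $$ (rr s, r) * Q (g c) $$ (r, jj c)))"
      by (simp add: sum_distrib_left sum_distrib_right sum.swap[of _ "{..<m}"] algebra_simps)
    also have "\<dots> = (\<Sum>c<m. x $ c * (Q (g s) * Q (g c)) $$ (rr s, jj c))"
    proof (intro sum.cong refl)
      fix c assume c: "c \<in> {..<m}"
      show "x $ c * (\<Sum>r<p. Q (g s) $$ (rr s, r) * Q (g c) $$ (r, jj c)) = x $ c * (Q (g s) * Q (g c)) $$ (rr s, jj c)"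
        using mult_entry[OF gC[OF s] gC[of c]] rj[OF s] rj[of c] c by simp
    qed
    also have "\<dots> = (\<Sum>c<m. if c = s then x $ s * Q (g s) $$ (rr s, jj s) else 0)"
    proof (intro sum.cong refl)
      fix c assume c: "c \<in> {..<m}"
      show "x $ c * (Q (g s) * Q (g c)) $$ (rr s, jj c) = (if c = s then x $ s * Q (g s) $$ (rr s, jj s) else 0)"
        using Qorth[OF gT(1)[OF s] gT(1)] ginj[OF s] c rj[OF s] rj[of c] by auto
    qed
    also have "\<dots> = x $ s * Q (g s) $$ (rr s, jj s)" using s by (simp add: sum.delta)
    finally show ?thesis using rj[OF s] by simp
  qed
  hence "x = 0\<^sub>v m" using x(1) by (intro eq_vecI) auto
  thus False using x(2) by simp
qed

lemma X_finite: "finite Xc" using X_sub fTn finite_surj by blast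

lemma X_card: "card Xc \<le> p"
  using card_mono[OF finite_imageI[OF fTn] X_sub] card_image_le[OF fTn, of chi] card_Tn by linarith

end

lemma (in group) gi1: "h \<in> carrier G \<Longrightarrow> a \<in> carrier G \<Longrightarrow> h \<otimes> (inv h \<otimes> a \<otimes> h) = a \<otimes> h"
  by (simp add: m_assoc[symmetric])

lemma (in group) gi2: "h1 \<in> carrier G \<Longrightarrow> h2 \<in> carrier G \<Longrightarrow> a \<in> carrier G \<Longrightarrow>
   inv (h1 \<otimes> h2) \<otimes> a \<otimes> (h1 \<otimes> h2) = inv h2 \<otimes> (inv h1 \<otimes> a \<otimes> h1) \<otimes> h2"
  by (simp add: m_assoc inv_mult_group)

lemma (in group) gi3: "h \<in> carrier G \<Longrightarrow> b \<in> carrier G \<Longrightarrow> h \<otimes> (inv h \<otimes> b \<otimes> h) \<otimes> inv h = b"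
  by (simp add: m_assoc) (simp add: m_assoc[symmetric])

lemma (in group) gi4: "h \<in> carrier G \<Longrightarrow> a \<in> carrier G \<Longrightarrow> inv h \<otimes> (h \<otimes> a \<otimes> inv h) \<otimes> h = a"
  by (simp add: m_assoc) (simp add: m_assoc[symmetric])

locale frepH = frepF +
  fixes H
  assumes H_sub: "subgroup H G"
    and nrm: "\<And>h a. h \<in> carrier G \<Longrightarrow> a \<in> A \<Longrightarrow> inv h \<otimes> a \<otimes> h \<in> A"
    and inj_conj: "inj_on (conj_action G A) H"
begin

lemma H_carr: "h \<in> H \<Longrightarrow> h \<in> carrier G" using H_sub subgroup.subset by blast

lemma nrm2: "h \<in> carrier G \<Longrightarrow> a \<in> A \<Longrightarrow> h \<otimes> a \<otimes> inv h \<in> A"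
  using nrm[of "inv h" a] grp by (simp add: group.inv_inv)

definition act where "act h \<psi> = (\<lambda>a\<in>A. \<psi> (inv h \<otimes> a \<otimes> h))"

lemma act_X: assumes h: "h \<in> H" and psi: "\<psi> \<in> Xc" shows "act h \<psi> \<in> Xc"
proof -
  obtain w where w: "w \<in> carrier_vec p" "w \<noteq> 0\<^sub>v p" "\<forall>a\<in>A. \<pi> a *\<^sub>v w = \<psi> a \<cdot>\<^sub>v w"
    using psi unfolding Xc_def by blast
  have hc: "h \<in> carrier G" using H_carr h by simp
  have Ch: "\<pi> h \<in> carrier_mat p p" using hc by simp
  define w' where "w' = \<pi> h *\<^sub>v w"
  have w'c: "w' \<in> carrier_vec p" unfolding w'_def using Ch w by simp
  have w'nz: "w' \<noteq> 0\<^sub>v p" unfolding w'_def using pi_vec_nonzero[OF hc w(1,2)] .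
  have "\<pi> a *\<^sub>v w' = act h \<psi> a \<cdot>\<^sub>v w'" if a: "a \<in> A" for a
  proof -
    define a' where "a' = inv h \<otimes> a \<otimes> h"
    have a'A: "a' \<in> A" unfolding a'_def using nrm[OF hc a] .
    have ac: "a \<in> carrier G" and a'c: "a' \<in> carrier G" using a a'A A_carr by auto
    have "a \<otimes> h = h \<otimes> a'" unfolding a'_def using group.gi1[OF grp hc ac] by simp
    hence eq: "\<pi> a * \<pi> h = \<pi> h * \<pi> a'" using pi_mult ac hc a'c by metis
    have "\<pi> a *\<^sub>v w' = (\<pi> a * \<pi> h) *\<^sub>v w" unfolding w'_def
      using assoc_mult_mat_vec[OF pi_carrier[OF ac] Ch w(1)] by simp
    also have "\<dots> = \<pi> h *\<^sub>v (\<pi> a' *\<^sub>v w)" unfolding eq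
      using assoc_mult_mat_vec[OF Ch pi_carrier[OF a'c] w(1)] .
    also have "\<dots> = \<psi> a' \<cdot>\<^sub>v w'" unfolding w'_def using w(3) a'A mult_mat_vec[OF Ch w(1)] by simp
    finally show ?thesis unfolding act_def a'_def using a by simp
  qed
  moreover have "act h \<psi> \<in> extensional A" unfolding act_def by simp
  ultimately show ?thesis unfolding Xc_def using w'c w'nz by blast
qed

lemma act_mult: assumes h1: "h1 \<in> H" and h2: "h2 \<in> H" and ext: "\<psi> \<in> extensional A"
  shows "act (h1 \<otimes> h2) \<psi> = act h1 (act h2 \<psi>)"
proof
  fix a
  show "act (h1 \<otimes> h2) \<psi> a = act h1 (act h2 \<psi>) a"
  proof (cases "a \<in> A")
    case True
    have c1: "h1 \<in> carrier G" and c2: "h2 \<in> carrier G" using h1 h2 H_carr by auto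
    have ac: "a \<in> carrier G" using True A_carr by simp
    have "inv h1 \<otimes> a \<otimes> h1 \<in> A" using nrm[OF c1 True] .
    thus ?thesis using True group.gi2[OF grp c1 c2 ac] unfolding act_def by simp
  next
    case False thus ?thesis unfolding act_def by simp
  qed
qed

lemma act_one: assumes ext: "\<psi> \<in> extensional A" shows "act \<one> \<psi> = \<psi>"
proof
  fix a
  have "inv \<one> \<otimes> a \<otimes> \<one> = a" if "a \<in> A"
    using A_carr[OF that] monoid.inv_one[OF group.is_monoid[OF grp]] monoid.l_one[OF group.is_monoid[OF grp]]
      monoid.r_one[OF group.is_monoid[OF grp]] by simp
  thus "act \<one> \<psi> a = \<psi> a"
    using ext unfolding act_def extensional_def by (cases "a \<in> A") auto
qed

lemma X_ext: "\<psi> \<in> Xc \<Longrightarrow> \<psi> \<in> extensional A" unfolding Xc_def by blast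

lemma act_inj: assumes h1: "h1 \<in> H" and h2: "h2 \<in> H" and eq: "\<And>\<psi>. \<psi> \<in> Xc \<Longrightarrow> act h1 \<psi> = act h2 \<psi>"
  shows "h1 = h2"
proof -
  have c1: "h1 \<in> carrier G" and c2: "h2 \<in> carrier G" using h1 h2 H_carr by auto
  have "conj_action G A h1 = conj_action G A h2"
  proof
    fix a show "conj_action G A h1 a = conj_action G A h2 a"
    proof (cases "a \<in> A")
      case True
      define b where "b = h1 \<otimes> a \<otimes> inv h1"
      have bA: "b \<in> A" unfolding b_def using nrm2[OF c1 True] .
      have bc: "b \<in> carrier G" using bA A_carr by simp
      have ac: "a \<in> carrier G" using True A_carr by simp
      have e1: "inv h1 \<otimes> b \<otimes> h1 = a" unfolding b_def using group.gi4[OF grp c1 ac] .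
      have "\<psi> (inv h1 \<otimes> b \<otimes> h1) = \<psi> (inv h2 \<otimes> b \<otimes> h2)" if psi: "\<psi> \<in> Xc" for \<psi>
        using fun_cong[OF eq[OF psi], of b] bA unfolding act_def by simp
      hence "inv h1 \<otimes> b \<otimes> h1 = inv h2 \<otimes> b \<otimes> h2"
        using separation[OF nrm[OF c1 bA] nrm[OF c2 bA]] by blast
      hence "a = inv h2 \<otimes> b \<otimes> h2" using e1 by simp
      hence "h2 \<otimes> a \<otimes> inv h2 = b" using group.gi3[OF grp c2 bc] by simp
      thus ?thesis unfolding conj_action_def b_def using True by simp
    next
      case False thus ?thesis unfolding conj_action_def by simp
    qed
  qed
  thus ?thesis using inj_conj h1 h2 unfolding inj_on_def by blast
qed

end

context frepH
begin

lemma act_bij: assumes h: "h \<in> H" shows "bij_betw (act h) Xc Xc"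
proof (rule bij_betw_byWitness[where f' = "act (inv h)"])
  have ih: "inv h \<in> H" using subgroup.m_inv_closed[OF H_sub h] .
  have hc: "h \<in> carrier G" using H_carr h by simp
  show "\<forall>a\<in>Xc. act (inv h) (act h a) = a"
    using act_mult[OF ih h] act_one X_ext group.l_inv[OF grp hc] by metis
  show "\<forall>a\<in>Xc. act h (act (inv h) a) = a"
    using act_mult[OF h ih] act_one X_ext group.r_inv[OF grp hc] by metis
  show "act h ` Xc \<subseteq> Xc" using act_X[OF h] by blast
  show "act (inv h) ` Xc \<subseteq> Xc" using act_X[OF ih] by blast
qed

lemma embed: "\<exists>\<phi>. \<phi> \<in> hom (G\<lparr>carrier := H\<rparr>) (sym_group p) \<and> inj_on \<phi> H"
proof -
  define m where "m = card Xc"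
  have mp: "m \<le> p" unfolding m_def using X_card .
  obtain f where f: "bij_betw f {1..m} Xc" using ex_bij_betw_nat_finite_1[OF X_finite] unfolding m_def by blast
  define finv where "finv = inv_into {1..m} f"
  have finv: "bij_betw finv Xc {1..m}" unfolding finv_def by (rule bij_betw_inv_into[OF f])
  have ffinv: "f (finv \<psi>) = \<psi>" if "\<psi> \<in> Xc" for \<psi>
    unfolding finv_def using f that by (simp add: bij_betw_def f_inv_into_f)
  have fX: "f i \<in> Xc" if "i \<in> {1..m}" for i using f that unfolding bij_betw_def by blast
  have finvm: "finv \<psi> \<in> {1..m}" if "\<psi> \<in> Xc" for \<psi> using finv that unfolding bij_betw_def by blast
  define \<phi> where "\<phi> h = (\<lambda>i. if i \<in> {1..m} then finv (act h (f i)) else i)" for h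
  have phi_bij: "bij_betw (\<phi> h) {1..m} {1..m}" if h: "h \<in> H" for h
  proof -
    have "bij_betw (finv \<circ> (act h \<circ> f)) {1..m} {1..m}"
      by (rule bij_betw_trans[OF bij_betw_trans[OF f act_bij[OF h]] finv])
    thus ?thesis by (rule iffD1[OF bij_betw_cong, rotated]) (simp add: \<phi>_def)
  qed
  have phi_perm: "\<phi> h \<in> carrier (sym_group p)" if h: "h \<in> H" for h
  proof -
    have "\<phi> h permutes {1..m}" by (rule bij_imp_permutes[OF phi_bij[OF h]]) (auto simp: \<phi>_def)
    hence "\<phi> h permutes {1..p}" by (rule permutes_subset) (use mp in auto)
    thus ?thesis unfolding sym_group_def by simp
  qed
  have phi_mult: "\<phi> (h1 \<otimes> h2) = \<phi> h1 \<circ> \<phi> h2" if h1: "h1 \<in> H" and h2: "h2 \<in> H" for h1 h2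
  proof
    fix i show "\<phi> (h1 \<otimes> h2) i = (\<phi> h1 \<circ> \<phi> h2) i"
    proof (cases "i \<in> {1..m}")
      case True
      have a2: "act h2 (f i) \<in> Xc" using act_X[OF h2 fX[OF True]] .
      have "(\<phi> h1 \<circ> \<phi> h2) i = finv (act h1 (act h2 (f i)))"
        using True finvm[OF a2] ffinv[OF a2] by (simp add: \<phi>_def)
      also have "\<dots> = \<phi> (h1 \<otimes> h2) i"
        using True act_mult[OF h1 h2 X_ext[OF fX[OF True]]] by (simp add: \<phi>_def)
      finally show ?thesis by simp
    next
      case False
      have "\<phi> h i = i" for h unfolding \<phi>_def by (simp only: if_not_P[OF False])
      thus ?thesis by simp
    qed
  qed
  have "\<phi> \<in> hom (G\<lparr>carrier := H\<rparr>) (sym_group p)"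
    unfolding hom_def using phi_perm phi_mult by (auto simp: sym_group_def)
  moreover have "inj_on \<phi> H"
  proof (rule inj_onI)
    fix h1 h2 assume h1: "h1 \<in> H" and h2: "h2 \<in> H" and eq: "\<phi> h1 = \<phi> h2"
    have "act h1 \<psi> = act h2 \<psi>" if psi: "\<psi> \<in> Xc" for \<psi>
    proof -
      have "\<phi> h1 (finv \<psi>) = \<phi> h2 (finv \<psi>)" using eq by simp
      hence "finv (act h1 \<psi>) = finv (act h2 \<psi>)" using finvm[OF psi] ffinv[OF psi] by (simp add: \<phi>_def)
      thus ?thesis unfolding finv_def
        by (rule inv_into_injective) (use f act_X[OF h1 psi] act_X[OF h2 psi] in \<open>auto simp: bij_betw_def\<close>)
    qed
    thus "h1 = h2" using act_inj[OF h1 h2] by blast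
  qed
  ultimately show ?thesis by blast
qed

end

lemma regular_rep:
  fixes G :: "('g, 'b) monoid_scheme" (structure)
  assumes grp: "group G" and fin: "finite (carrier G)"
  shows "\<exists>N \<rho>. faithful_rep G N \<rho>"
proof -
  interpret group G by (rule grp)
  define N where "N = card (carrier G)"
  obtain e where e: "bij_betw e {0..<N} (carrier G)" using ex_bij_betw_nat_finite[OF fin] unfolding N_def by blast
  have eC: "e l \<in> carrier G" if "l < N" for l using e that unfolding bij_betw_def by auto
  have einj: "e l = e l' \<longleftrightarrow> l = l'" if "l < N" "l' < N" for l l'
    using e that unfolding bij_betw_def inj_on_def by auto
  have esurj: "\<exists>l<N. e l = g" if "g \<in> carrier G" for g
    using e that unfolding bij_betw_def by (metis atLeastLessThan_iff imageE)
  define \<rho> where "\<rho> g = mat N N (\<lambda>(r,s). if e r = g \<otimes> e s then (1::complex) else 0)" for g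
  have rC: "\<rho> g \<in> carrier_mat N N" for g unfolding \<rho>_def by simp
  have rD[simp]: "dim_row (\<rho> g) = N" "dim_col (\<rho> g) = N" for g unfolding \<rho>_def by simp_all
  have rmult: "\<rho> (x \<otimes> y) = \<rho> x * \<rho> y" if x: "x \<in> carrier G" and y: "y \<in> carrier G" for x y
  proof (rule eq_matI)
    fix r s assume "r < dim_row (\<rho> x * \<rho> y)" "s < dim_col (\<rho> x * \<rho> y)"
    hence r: "r < N" and s: "s < N" by auto
    obtain l0 where l0: "l0 < N" "e l0 = y \<otimes> e s" using esurj[of "y \<otimes> e s"] y eC[OF s] by auto
    have "(\<rho> x * \<rho> y) $$ (r,s) = (\<Sum>l<N. (if e r = x \<otimes> e l then 1 else 0) * (if e l = y \<otimes> e s then 1 else 0))"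
      using r s by (simp add: mult_entry[OF rC rC r s]) (simp add: \<rho>_def)
    also have "\<dots> = (\<Sum>l<N. if l = l0 then (if e r = x \<otimes> e l0 then 1 else 0) else 0)"
    proof (intro sum.cong refl)
      fix l assume l: "l \<in> {..<N}"
      have "e l = y \<otimes> e s \<longleftrightarrow> l = l0" using l0 einj[of l l0] l by auto
      thus "(if e r = x \<otimes> e l then 1 else 0) * (if e l = y \<otimes> e s then 1 else (0::complex))
          = (if l = l0 then (if e r = x \<otimes> e l0 then 1 else 0) else 0)" by auto
    qed
    also have "\<dots> = (if e r = x \<otimes> (y \<otimes> e s) then 1 else 0)" using l0 by (simp add: sum.delta)
    also have "\<dots> = \<rho> (x \<otimes> y) $$ (r,s)" using r s x y eC[OF s] by (simp add: \<rho>_def m_assoc)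
    finally show "\<rho> (x \<otimes> y) $$ (r,s) = (\<rho> x * \<rho> y) $$ (r,s)" by simp
  qed (use rC in auto)
  have rone: "\<rho> \<one> = 1\<^sub>m N"
    by (rule eq_matI) (auto simp: \<rho>_def eC einj)
  have rinv: "invertible_mat (\<rho> x)" if x: "x \<in> carrier G" for x
  proof -
    have "\<rho> x * \<rho> (inv x) = 1\<^sub>m N" using rmult[of x "inv x"] x rone by simp
    moreover have "\<rho> (inv x) * \<rho> x = 1\<^sub>m N" using rmult[of "inv x" x] x rone by simp
    ultimately show ?thesis unfolding invertible_mat_def inverts_mat_def using rC
      by (metis carrier_matD(1,2) square_mat.simps)
  qed
  have "\<rho> \<in> hom G (GL_C N)" unfolding hom_def GL_C_def using rC rinv rmult by auto
  moreover have "inj_on \<rho> (carrier G)"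
  proof (rule inj_onI)
    fix x y assume x: "x \<in> carrier G" and y: "y \<in> carrier G" and eq: "\<rho> x = \<rho> y"
    obtain s where s: "s < N" "e s = \<one>" using esurj[of \<one>] by auto
    obtain r where r: "r < N" "e r = x" using esurj[OF x] by auto
    have "\<rho> x $$ (r,s) = 1" using r s x by (simp add: \<rho>_def)
    hence "\<rho> y $$ (r,s) = 1" using eq by simp
    hence "x = y \<otimes> \<one>" using r s by (simp add: \<rho>_def split: if_splits)
    thus "x = y" using y by simp
  qed
  ultimately show ?thesis unfolding faithful_rep_def by blast
qed

lemma part1:
  fixes G :: "('g, 'b) monoid_scheme" and A H :: "'g set"
  assumes "group G" and "finite (carrier G)"
    and "internal_semidirect G A H"
    and "comm_group (G\<lparr>carrier := A\<rparr>)"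
    and "inj_on (conj_action G A) H"
    and fr: "faithful_rep G p \<pi>"
  shows "embeds_in_sym (G\<lparr>carrier := H\<rparr>) p"
proof -
  have f1: "frep G p \<pi>" using assms fr unfolding faithful_rep_def by (intro frep.intro) auto
  interpret frep G p \<pi> by (rule f1)
  have nA: "A \<lhd> G" and sH: "subgroup H G" using assms(3) unfolding internal_semidirect_def by auto
  have sA: "subgroup A G" using normal_imp_subgroup[OF nA] .
  have comm: "x \<otimes>\<^bsub>G\<^esub> y = y \<otimes>\<^bsub>G\<^esub> x" if "x \<in> A" "y \<in> A" for x y
    using comm_monoid.m_comm[OF comm_group.axioms(1)[OF assms(4)], of x y] that by simp
  have f2: "frepA G p \<pi> A" by (intro frepA.intro[OF f1] frepA_axioms.intro) (use sA comm in auto)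
  interpret frepA G p \<pi> A by (rule f2)
  have finA: "finite A" using sA assms(2) subgroup.subset finite_subset by blast
  obtain as where as: "set as = A" using finite_list[OF finA] by blast
  obtain T Q where ok: "fam_ok as T Q" using fam_exists[of as] as by blast
  have f3: "frepF G p \<pi> A T Q"
    using ok as unfolding fam_ok_def by (intro frepF.intro[OF f2] frepF_axioms.intro) auto
  interpret frepF G p \<pi> A T Q by (rule f3)
  have f4: "frepH G p \<pi> A T Q H"
    by (intro frepH.intro[OF f3] frepH_axioms.intro) (use sH normal.inv_op_closed1[OF nA] assms(5) in auto)
  interpret frepH G p \<pi> A T Q H by (rule f4)
  show ?thesis using embed unfolding embeds_in_sym_def by simp
qed

theorem theorem4p4:
  fixes G :: "('g, 'b) monoid_scheme" and A H :: "'g set"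
  assumes "group G" and "finite (carrier G)"
    and "internal_semidirect G A H"
    and "comm_group (G\<lparr>carrier := A\<rparr>)"
    and "inj_on (conj_action G A) H"
  shows "(\<forall>p \<pi>. faithful_rep G p \<pi> \<longrightarrow> embeds_in_sym (G\<lparr>carrier := H\<rparr>) p)
         \<and> mdim_C G \<ge> min_perm_degree (G\<lparr>carrier := H\<rparr>)"
proof -
  have P1: "\<forall>p \<pi>. faithful_rep G p \<pi> \<longrightarrow> embeds_in_sym (G\<lparr>carrier := H\<rparr>) p"
    using part1[OF assms] by blast
  obtain N \<rho> where "faithful_rep G N \<rho>" using regular_rep[OF assms(1,2)] by blast
  hence "\<exists>n. \<exists>\<pi>. faithful_rep G n \<pi>" by blast
  hence "\<exists>\<pi>. faithful_rep G (mdim_C G) \<pi>" unfolding mdim_C_def by (rule LeastI_ex)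
  hence "embeds_in_sym (G\<lparr>carrier := H\<rparr>) (mdim_C G)" using P1 by blast
  hence "min_perm_degree (G\<lparr>carrier := H\<rparr>) \<le> mdim_C G"
    unfolding min_perm_degree_def by (rule Least_le)
  thus ?thesis using P1 by blast
qed


end
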